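(* Let $X$ be an infinite-dimensional real normed linear space with zero $\theta$ whose norm is strictly convex. Then for every $m\in\mathbb{N}$ and every $E$ with $B(\theta,1)\subseteq E\subseteq\overline{B}(\theta,1)$ and $E=\bigcup_{i=1}^m A_i$, where $A_i\cong A_j$ for all $i,j$, either $\theta\in\bigcap_{i=1}^m\mathrm{Int}\,A_i$ or $\theta\notin\bigcup_{i=1}^m\mathrm{Int}\,A_i$.
   Context: $B(\theta,1)=\{x:\|x\|<1\}$, $\overline{B}(\theta,1)=\{x:\|x\|\leqslant1\}$. The norm is strictly convex if for all $x\ne y$ with $\|x\|=\|y\|=1$ and $\lambda\in(0,1)$, $\|\lambda x+(1-\lambda)y\|<1$. Sets $A,B\subseteq X$ are congruent, $A\cong B$, if there is a surjective isometry $f\colon X\to X$ with $f(A)=B$. $\mathrm{Int}\,A$ is the set of $x\in A$ such that some open ball $B(x,\varepsilon)\subseteq A$. *)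

theory Defs
  imports "HOL-Analysis.Analysis"
begin

definition infinite_dimensional :: "'a::real_normed_vector itself \<Rightarrow> bool" where
  "infinite_dimensional _ \<longleftrightarrow> \<not> (\<exists>B::'a set. finite B \<and> span B = UNIV)"

definition strictly_convex_norm :: "'a::real_normed_vector itself \<Rightarrow> bool" where
  "strictly_convex_norm _ \<longleftrightarrow>
     (\<forall>x y::'a. \<forall>t::real. x \<noteq> y \<and> norm x = 1 \<and> norm y = 1 \<and> 0 < t \<and> t < 1
        \<longrightarrow> norm (t *\<^sub>R x + (1 - t) *\<^sub>R y) < 1)"

definition congruent_sets :: "'a::real_normed_vector set \<Rightarrow> 'a set \<Rightarrow> bool" where
  "congruent_sets A B \<longleftrightarrow>
     (\<exists>f::'a \<Rightarrow> 'a. surj f \<and> (\<forall>x y. dist (f x) (f y) = dist x y) \<and> f ` A = B)"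

end

theory Submission
  imports Defs
begin

lemma nearest_span:
  fixes M :: "'a::real_normed_vector set"
  assumes "finite M"
  shows "\<exists>v\<in>span M. \<forall>u\<in>span M. norm (z - v) \<le> norm (z - u)"
  using assms
proof (induction M arbitrary: z rule: finite_induct)
  case empty
  then show ?case by auto
next
  case (insert b M)
  show ?case
  proof (cases "b \<in> span M")
    case True
    then have "span (insert b M) = span M" by (rule span_redundant)
    then show ?thesis using insert.IH by simp
  next
    case False
    obtain wb where wb: "wb \<in> span M" "\<forall>u\<in>span M. norm (b - wb) \<le> norm (b - u)"
      using insert.IH by blast
    define \<delta> where "\<delta> = norm (b - wb)"
    have dpos: "\<delta> > 0" unfolding \<delta>_def using wb(1) False by auto
    have dle: "\<delta> \<le> norm (b - w)" if "w \<in> span M" for w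
      using wb(2) that \<delta>_def by auto
    define g where "g t = infdist (z - t *\<^sub>R b) (span M)" for t :: real
    have ne: "span M \<noteq> {}" using span_zero by blast
    have cont: "continuous_on UNIV g"
      unfolding g_def by (intro continuous_intros)
    have lower: "\<bar>t\<bar> * \<delta> - norm z \<le> g t" for t
    proof -
      have "\<bar>t\<bar> * \<delta> - norm z \<le> dist (z - t *\<^sub>R b) w" if w: "w \<in> span M" for w
      proof -
        have n1: "\<bar>t\<bar> * \<delta> \<le> norm (t *\<^sub>R b + w)"
        proof (cases "t = 0")
          case True
          then show ?thesis by simp
        next
          case False
          have "t *\<^sub>R b + w = t *\<^sub>R (b - (- (1/t) *\<^sub>R w))" using False
            by (simp add: algebra_simps)
          then have "norm (t *\<^sub>R b + w) = \<bar>t\<bar> * norm (b - (- (1/t) *\<^sub>R w))" by simp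
          moreover have "\<delta> \<le> norm (b - (- (1/t) *\<^sub>R w))"
            using dle span_scale w by blast
          ultimately show ?thesis by (simp add: mult_left_mono)
        qed
        have "norm (t *\<^sub>R b + w) \<le> norm (z - t *\<^sub>R b - w) + norm z"
          using norm_triangle_ineq4[of z "z - t *\<^sub>R b - w"] by (simp add: algebra_simps)
        then show ?thesis using n1 by (simp add: dist_norm)
      qed
      then show ?thesis unfolding g_def infdist_notempty[OF ne]
        by (intro cINF_greatest ne) auto
    qed
    define R where "R = 2 * norm z / \<delta>"
    have R0: "R \<ge> 0" unfolding R_def using dpos by simp
    obtain t0 where t0: "t0 \<in> {-R..R}" "\<forall>t\<in>{-R..R}. g t0 \<le> g t"
      using continuous_attains_inf[of "{-R..R}" g] cont R0
      by (metis atLeastAtMost_iff compact_Icc continuous_on_subset neg_le_0_iff_le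
          order.trans subset_UNIV empty_iff)
    have g0: "g 0 \<le> norm z" unfolding g_def using infdist_le[OF span_zero, of z M] by simp
    have gmin: "g t0 \<le> g t" for t
    proof (cases "t \<in> {-R..R}")
      case True then show ?thesis using t0 by blast
    next
      case False
      then have "\<bar>t\<bar> > R" by auto
      then have "\<bar>t\<bar> * \<delta> > R * \<delta>" using dpos by simp
      moreover have "R * \<delta> = 2 * norm z" unfolding R_def using dpos by simp
      ultimately have "g t > norm z" using lower[of t] by linarith
      moreover have "g t0 \<le> g 0" using t0 R0 by auto
      ultimately show ?thesis using g0 by linarith
    qed
    obtain w0 where w0: "w0 \<in> span M" "\<forall>u\<in>span M. norm (z - t0 *\<^sub>R b - w0) \<le> norm (z - t0 *\<^sub>R b - u)"
      using insert.IH[of "z - t0 *\<^sub>R b"] by blast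
    have w0g: "norm (z - t0 *\<^sub>R b - w0) \<le> g t0"
      unfolding g_def infdist_notempty[OF ne]
      using w0(2) by (intro cINF_greatest ne) (auto simp: dist_norm)
    define v where "v = t0 *\<^sub>R b + w0"
    have vin: "v \<in> span (insert b M)"
      unfolding v_def span_insert using w0(1) by (auto intro!: exI[of _ t0])
    have "norm (z - v) \<le> norm (z - u)" if u: "u \<in> span (insert b M)" for u
    proof -
      obtain k where k: "u - k *\<^sub>R b \<in> span M" using u unfolding span_insert by auto
      have "g k \<le> dist (z - k *\<^sub>R b) (u - k *\<^sub>R b)"
        unfolding g_def by (rule infdist_le[OF k])
      also have "\<dots> = norm (z - u)" by (simp add: dist_norm algebra_simps)
      finally have "g k \<le> norm (z - u)" .
      moreover have "norm (z - v) = norm (z - t0 *\<^sub>R b - w0)" unfolding v_def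
        by (simp add: algebra_simps)
      ultimately show ?thesis using w0g gmin[of k] by linarith
    qed
    then show ?thesis using vin by blast
  qed
qed

lemma unit_far:
  fixes M :: "'a::real_normed_vector set"
  assumes "infinite_dimensional TYPE('a)" "finite M"
  shows "\<exists>x::'a. norm x = 1 \<and> (\<forall>u\<in>span M. 1 \<le> norm (x - u))"
proof -
  obtain z where z: "z \<notin> span M" using assms unfolding infinite_dimensional_def by blast
  obtain v where v: "v \<in> span M" "\<forall>u\<in>span M. norm (z - v) \<le> norm (z - u)"
    using nearest_span[OF assms(2)] by blast
  define y where "y = z - v"
  have y0: "y \<noteq> 0" using z v(1) unfolding y_def by auto
  have ny: "norm y > 0" using y0 by simp
  define x where "x = (1 / norm y) *\<^sub>R y"
  have "1 \<le> norm (x - u)" if u: "u \<in> span M" for u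
  proof -
    have "v + norm y *\<^sub>R u \<in> span M" using u v(1) by (intro span_add span_scale)
    then have "norm y \<le> norm (z - (v + norm y *\<^sub>R u))" using v(2) y_def by auto
    also have "z - (v + norm y *\<^sub>R u) = norm y *\<^sub>R (x - u)"
      unfolding x_def y_def using ny by (simp add: algebra_simps)
    finally have "norm y \<le> norm y * norm (x - u)" by simp
    then show ?thesis using ny by simp
  qed
  moreover have "norm x = 1" unfolding x_def using ny by simp
  ultimately show ?thesis by blast
qed

theorem mainTheorem11:
  fixes E :: "'a::real_normed_vector set" and A :: "nat \<Rightarrow> 'a set" and m :: nat
  assumes "infinite_dimensional TYPE('a)"
    and "strictly_convex_norm TYPE('a)"
    and "ball 0 1 \<subseteq> E" and "E \<subseteq> cball 0 1"
    and "E = (\<Union>i\<in>{1..m}. A i)"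
    and "\<forall>i\<in>{1..m}. \<forall>j\<in>{1..m}. congruent_sets (A i) (A j)"
  shows "0 \<in> (\<Inter>i\<in>{1..m}. interior (A i)) \<or> 0 \<notin> (\<Union>i\<in>{1..m}. interior (A i))"
proof (rule ccontr)
  assume "\<not> ?thesis"
  then obtain i j where ij: "i \<in> {1..m}" "j \<in> {1..m}" "0 \<in> interior (A i)" "0 \<notin> interior (A j)"
    by blast
  obtain f where f: "surj f" "\<forall>x y. dist (f x) (f y) = dist x y" "f ` A j = A i"
    using assms(6) ij(1,2) unfolding congruent_sets_def by blast
  obtain c where c: "f c = 0" using f(1) by (metis surjD)
  obtain \<epsilon> where eps: "\<epsilon> > 0" "ball 0 \<epsilon> \<subseteq> A i" using ij(3) mem_interior by blast
  have Ai: "A i \<subseteq> cball 0 1" using assms(4,5) ij(1) by blast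
  have Aj: "A j \<subseteq> cball 0 1" using assms(4,5) ij(2) by blast
  have c0: "c \<noteq> 0"
  proof
    assume "c = 0"
    have "ball 0 \<epsilon> \<subseteq> A j"
    proof
      fix y :: 'a assume y: "y \<in> ball 0 \<epsilon>"
      have "dist 0 (f y) = dist c y" using f(2)[rule_format, of c y] c by simp
      then have "f y \<in> ball 0 \<epsilon>" using y \<open>c = 0\<close> by simp
      then have "f y \<in> f ` A j" using eps f(3) by auto
      then obtain a where a: "a \<in> A j" "f a = f y" by auto
      then have "dist a y = 0" using f(2)[rule_format, of a y] by simp
      then show "y \<in> A j" using a by simp
    qed
    then have "0 \<in> interior (A j)" using eps mem_interior by blast
    then show False using ij(4) by simp
  qed
  have Ajc: "dist c a \<le> 1" if "a \<in> A j" for a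
  proof -
    have "f a \<in> A i" using f(3) that by auto
    then have "dist 0 (f a) \<le> 1" using Ai by auto
    then show ?thesis using f(2)[rule_format, of c a] c by simp
  qed
  have "\<forall>k\<in>{1..m}. \<exists>g. surj g \<and> (\<forall>x y. dist (g x) (g y) = dist x y) \<and> g ` A j = A k"
    using assms(6) ij(2) unfolding congruent_sets_def by blast
  then obtain G where G0: "\<forall>k\<in>{1..m}. surj (G k) \<and> (\<forall>x y. dist (G k x) (G k y) = dist x y) \<and> G k ` A j = A k"
    by (rule bchoice[elim_format]) blast
  then have G: "\<And>k. k \<in> {1..m} \<Longrightarrow> (\<forall>x y. dist (G k x) (G k y) = dist x y) \<and> G k ` A j = A k"
    by blast
  define d where "d k = G k 0" for k
  define e where "e k = G k c" for k
  define U where "U = (\<Union>k\<in>{1..m}. cball (d k) 1 \<inter> cball (e k) 1)"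
  have "A k \<subseteq> cball (d k) 1 \<inter> cball (e k) 1" if k: "k \<in> {1..m}" for k
  proof
    fix y assume "y \<in> A k"
    then obtain a where a: "a \<in> A j" "y = G k a" using G[OF k] by blast
    have "dist (d k) y = dist 0 a" using G[OF k] a unfolding d_def by simp
    moreover have "dist (e k) y = dist c a" using G[OF k] a unfolding e_def by simp
    ultimately show "y \<in> cball (d k) 1 \<inter> cball (e k) 1" using a(1) Aj Ajc by auto
  qed
  then have "E \<subseteq> U" unfolding U_def assms(5) by (intro UN_mono) auto
  then have "ball 0 1 \<subseteq> U" using assms(3) by (rule order_trans[rotated])
  moreover have "closed U" unfolding U_def by (intro closed_UN) auto
  ultimately have "closure (ball 0 1) \<subseteq> U" by (rule closure_minimal)
  then have cU: "cball 0 1 \<subseteq> U" using closure_ball[of 1 "0::'a"] by simp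
  define Mp where "Mp = (\<lambda>k. (1/2) *\<^sub>R (d k + e k)) ` {1..m}"
  obtain x :: 'a where x: "norm x = 1" "\<forall>u\<in>span Mp. 1 \<le> norm (x - u)"
    using unit_far[OF assms(1), of Mp] unfolding Mp_def by blast
  have "x \<in> U" using cU x(1) by auto
  then obtain k where k: "k \<in> {1..m}" "dist (d k) x \<le> 1" "dist (e k) x \<le> 1"
    unfolding U_def by auto
  define p where "p = x - d k"
  define q where "q = x - e k"
  have np: "norm p \<le> 1" using k(2) unfolding p_def by (simp add: dist_norm norm_minus_commute)
  have nq: "norm q \<le> 1" using k(3) unfolding q_def by (simp add: dist_norm norm_minus_commute)
  have "dist (d k) (e k) = dist 0 c" using G[OF k(1)] unfolding d_def e_def by simp
  then have "d k \<noteq> e k" using c0 by auto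
  then have pq: "p \<noteq> q" unfolding p_def q_def by auto
  have mid: "x - (1/2) *\<^sub>R (d k + e k) = (1/2) *\<^sub>R p + (1 - 1/2) *\<^sub>R q"
  proof -
    have xx: "x = (1/2) *\<^sub>R x + (1/2) *\<^sub>R x"
      by (simp flip: scaleR_add_left)
    show ?thesis unfolding p_def q_def
      by (subst xx) (simp add: algebra_simps)
  qed
  have lt: "norm ((1/2) *\<^sub>R p + (1 - 1/2) *\<^sub>R q) < (1::real)"
  proof (cases "norm p = 1 \<and> norm q = 1")
    case True
    then show ?thesis using assms(2)[unfolded strictly_convex_norm_def, rule_format, of p q "1/2"] pq by simp
  next
    case False
    have "norm ((1/2) *\<^sub>R p + (1 - 1/2) *\<^sub>R q) \<le> norm ((1/2) *\<^sub>R p) + norm ((1 - 1/2) *\<^sub>R q)"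
      by (rule norm_triangle_ineq)
    also have "\<dots> = (1/2) * norm p + (1/2) * norm q" by simp
    finally show ?thesis using False np nq by linarith
  qed
  have "(1/2) *\<^sub>R (d k + e k) \<in> span Mp" unfolding Mp_def using k(1) by (intro span_base) auto
  then have "1 \<le> norm (x - (1/2) *\<^sub>R (d k + e k))" using x(2) by blast
  then show False using lt mid by simp
qed

end
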